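(* Let $\boldsymbol\mu>\mathbf 0$ and assume $\mathbf I-\mathbf G$ is irreducible for every $\mathbf G\in\mathcal G(\boldsymbol\mu)$. Define $\beta^*(\boldsymbol\mu)=1/\max_{\mathbf G\in\mathcal G(\boldsymbol\mu)}\lambda(\mathbf I-\mathbf G)$. Then for $\beta>0$, there exists $\mathbf p\geq\mathbf 0$ with $\mathbf A(\beta\boldsymbol\mu)\mathbf p\geq\mathbf n(\beta\boldsymbol\mu)$ if and only if $\beta<\beta^*(\boldsymbol\mu)$; in particular $\sup\{\beta>0:\exists\,\mathbf p\geq\mathbf 0,\ \mathbf A(\beta\boldsymbol\mu)\mathbf p\geq\mathbf n(\beta\boldsymbol\mu)\}=\beta^*(\boldsymbol\mu)$.
   Context: Multicast system: $N$ transmitters; transmitter $T_i$ has $K_i\geq1$ receivers $R_i^{k}$, $k\in\mathcal K_i=\{1,\dots,K_i\}$. Channel gains $g_{r_i^{k},t_j}\geq 0$ (from $T_j$ to $R_i^k$) with $g_{r_i^{k},t_i}>0$; noise variance $\sigma^2>0$. For $\boldsymbol\mu\in\mathbb R^N$, $\mathbf a_i^{k}(\boldsymbol\mu)\in\mathbb R^{1\times N}$ is the row vector with $i$-th entry $1$ and $j$-th entry $-\mu_i g_{r_i^{k},t_j}/g_{r_i^{k},t_i}$ for $j\neq i$; $n_i^{k}(\boldsymbol\mu)=\mu_i\sigma^2/g_{r_i^{k},t_i}$. $\mathbf A(\boldsymbol\mu)$ stacks all rows $\mathbf a_i^{k}(\boldsymbol\mu)$, $\mathbf n(\boldsymbol\mu)$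 stacks the corresponding $n_i^k(\boldsymbol\mu)$. $\mathcal G(\boldsymbol\mu)$ is the set of $N\times N$ matrices whose $i$-th row is $\mathbf a_i^{k_i}(\boldsymbol\mu)$ for a choice $k_i\in\mathcal K_i$. $\lambda(\cdot)$ is the Perron–Frobenius eigenvalue (spectral radius). *)

theory Defs
  imports "Jordan_Normal_Form.Spectral_Radius"
begin

(* Conventions: transmitters are indexed i < N (0-based); transmitter i has
   receivers k < K i (0-based).  g i k j is the channel gain g_{r_i^k, t_j}
   from transmitter T_j to receiver R_i^k.  sigma2 is the noise variance. *)

definition a_entry :: "(nat \<Rightarrow> nat \<Rightarrow> nat \<Rightarrow> real) \<Rightarrow> (nat \<Rightarrow> real) \<Rightarrow> nat \<Rightarrow> nat \<Rightarrow> nat \<Rightarrow> real" where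
  "a_entry g mu i k j = (if j = i then 1 else - mu i * g i k j / g i k i)"

definition n_entry :: "(nat \<Rightarrow> nat \<Rightarrow> nat \<Rightarrow> real) \<Rightarrow> real \<Rightarrow> (nat \<Rightarrow> real) \<Rightarrow> nat \<Rightarrow> nat \<Rightarrow> real" where
  "n_entry g sigma2 mu i k = mu i * sigma2 / g i k i"

definition A_ge_n :: "nat \<Rightarrow> (nat \<Rightarrow> nat) \<Rightarrow> (nat \<Rightarrow> nat \<Rightarrow> nat \<Rightarrow> real) \<Rightarrow> real \<Rightarrow> (nat \<Rightarrow> real) \<Rightarrow> (nat \<Rightarrow> real) \<Rightarrow> bool" where
  "A_ge_n N K g sigma2 mu p \<longleftrightarrow>
     (\<forall>i<N. \<forall>k<K i. (\<Sum>j<N. a_entry g mu i k j * p j) \<ge> n_entry g sigma2 mu i k)"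

definition G_mat :: "nat \<Rightarrow> (nat \<Rightarrow> nat \<Rightarrow> nat \<Rightarrow> real) \<Rightarrow> (nat \<Rightarrow> real) \<Rightarrow> (nat \<Rightarrow> nat) \<Rightarrow> real mat" where
  "G_mat N g mu c = mat N N (\<lambda>(i, j). a_entry g mu i (c i) j)"

definition G_set :: "nat \<Rightarrow> (nat \<Rightarrow> nat) \<Rightarrow> (nat \<Rightarrow> nat \<Rightarrow> nat \<Rightarrow> real) \<Rightarrow> (nat \<Rightarrow> real) \<Rightarrow> real mat set" where
  "G_set N K g mu = {G_mat N g mu c | c. \<forall>i<N. c i < K i}"

text \<open>Spectral radius of a real square matrix (= Perron-Frobenius eigenvalue for
  nonnegative matrices).\<close>
definition rho :: "real mat \<Rightarrow> real" where
  "rho M = spectral_radius (map_mat complex_of_real M)"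

text \<open>For n \<ge> 2 this is strong connectivity; a 1x1 matrix is irreducible iff
  nonzero.\<close>
definition irreducible_mat :: "real mat \<Rightarrow> bool" where
  "irreducible_mat M \<longleftrightarrow>
     (\<forall>i<dim_row M. \<forall>j<dim_row M.
        (i, j) \<in> {(a, b). a < dim_row M \<and> b < dim_row M \<and> M $$ (a, b) \<noteq> 0}\<^sup>+)"

definition beta_star :: "nat \<Rightarrow> (nat \<Rightarrow> nat) \<Rightarrow> (nat \<Rightarrow> nat \<Rightarrow> nat \<Rightarrow> real) \<Rightarrow> (nat \<Rightarrow> real) \<Rightarrow> real" where
  "beta_star N K g mu = 1 / Max (rho ` (\<lambda>G. 1\<^sub>m N - G) ` G_set N K g mu)"

end

theory Submission
  imports Defs "HOL-Library.FuncSet"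
begin

definition mv :: "nat \<Rightarrow> (nat \<Rightarrow> nat \<Rightarrow> real) \<Rightarrow> (nat \<Rightarrow> real) \<Rightarrow> nat \<Rightarrow> real" where
  "mv N B x = (\<lambda>i. \<Sum>j<N. B i j * x j)"

definition Mc :: "nat \<Rightarrow> (nat \<Rightarrow> nat \<Rightarrow> real) \<Rightarrow> complex mat" where
  "Mc N B = mat N N (\<lambda>(i,j). complex_of_real (B i j))"

lemma Mc_carrier[simp]: "Mc N B \<in> carrier_mat N N" by (simp add: Mc_def)
lemma Mc_dim[simp]: "dim_row (Mc N B) = N" "dim_col (Mc N B) = N" by (simp_all add: Mc_def)

lemma Mc_mult: "i < N \<Longrightarrow> v \<in> carrier_vec N \<Longrightarrow> (Mc N B *\<^sub>v v) $ i = (\<Sum>j<N. complex_of_real (B i j) * v $ j)"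
  by (simp add: Mc_def scalar_prod_def row_def atLeast0LessThan)

lemma eig_core:
  assumes Bnn: "\<forall>i<N. \<forall>j<N. B i j \<ge> 0" and xpos: "\<forall>i<N. x i > 0"
    and ev: "eigenvalue (Mc N B) l"
  shows "\<exists>i0<N. x i0 > 0 \<and> norm l * x i0 \<le> mv N B x i0"
proof -
  from ev obtain v where vc: "v \<in> carrier_vec N" and v0: "v \<noteq> 0\<^sub>v N" and eq: "Mc N B *\<^sub>v v = l \<cdot>\<^sub>v v"
    unfolding eigenvalue_def eigenvector_def by auto
  have "\<exists>j<N. v $ j \<noteq> 0"
  proof (rule ccontr)
    assume "\<not> ?thesis"
    hence "v = 0\<^sub>v N" using vc by (intro eq_vecI) auto
    thus False using v0 by simp
  qed
  then obtain j0 where j0: "j0 < N" "v $ j0 \<noteq> 0" by auto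
  define r where "r i = norm (v $ i) / x i" for i
  define t where "t = Max (r ` {..<N})"
  have fin: "finite (r ` {..<N})" and ne: "r ` {..<N} \<noteq> {}" using j0 by auto
  have rle: "r j \<le> t" if "j < N" for j unfolding t_def using fin that by auto
  obtain i0 where i0: "i0 < N" "r i0 = t" using Max_in[OF fin ne] unfolding t_def by auto
  have "r j0 > 0" using j0 xpos unfolding r_def by auto
  hence tpos: "t > 0" using rle[OF j0(1)] by linarith
  have nv: "norm (v $ j) \<le> t * x j" if "j < N" for j
    using rle[OF that] xpos that unfolding r_def by (simp add: divide_le_eq)
  have "norm l * norm (v $ i0) = norm ((Mc N B *\<^sub>v v) $ i0)"
    using eq i0 vc by (simp add: norm_mult)
  also have "\<dots> = norm (\<Sum>j<N. complex_of_real (B i0 j) * v $ j)"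
    using Mc_mult[OF i0(1) vc] by simp
  also have "\<dots> \<le> (\<Sum>j<N. norm (complex_of_real (B i0 j) * v $ j))" by (rule norm_sum)
  also have "\<dots> = (\<Sum>j<N. B i0 j * norm (v $ j))"
    using Bnn i0 by (intro sum.cong) (auto simp: norm_mult)
  also have "\<dots> \<le> (\<Sum>j<N. B i0 j * (t * x j))"
    using Bnn i0 nv by (intro sum_mono mult_left_mono) auto
  also have "\<dots> = t * mv N B x i0" by (simp add: mv_def sum_distrib_left algebra_simps)
  finally have 1: "norm l * norm (v $ i0) \<le> t * mv N B x i0" .
  have "norm (v $ i0) = t * x i0" using i0 xpos unfolding r_def by auto
  with 1 tpos have "t * (norm l * x i0) \<le> t * mv N B x i0" by (simp add: algebra_simps)
  hence "norm l * x i0 \<le> mv N B x i0" using tpos by simp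
  thus ?thesis using i0 xpos by auto
qed

lemma rho_le:
  assumes Bnn: "\<forall>i<N. \<forall>j<N. B i j \<ge> 0" and xpos: "\<forall>i<N. x i > 0" and N: "N > 0"
    and le: "\<forall>i<N. mv N B x i < s * x i"
  shows "spectral_radius (Mc N B) < s"
proof -
  obtain l where "l \<in> spectrum (Mc N B)" and r: "spectral_radius (Mc N B) = norm l"
    using spectral_radius_mem_max(1)[OF Mc_carrier N] by auto
  hence "eigenvalue (Mc N B) l" by (simp add: spectrum_def)
  from eig_core[OF Bnn xpos this] obtain i0 where "i0 < N" "x i0 > 0" "norm l * x i0 \<le> mv N B x i0" by auto
  with le[rule_format, OF \<open>i0 < N\<close>] have "norm l * x i0 < s * x i0" by linarith
  with \<open>x i0 > 0\<close> r show ?thesis by simp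
qed

lemma rho_ge:
  assumes j: "j < N" "z j \<noteq> 0" and eq: "\<forall>i<N. mv N B z i = s * z i"
  shows "\<bar>s\<bar> \<le> spectral_radius (Mc N B)"
proof -
  define v where "v = vec N (\<lambda>i. complex_of_real (z i))"
  have vc: "v \<in> carrier_vec N" by (simp add: v_def)
  have "v \<noteq> 0\<^sub>v N"
  proof
    assume "v = 0\<^sub>v N"
    hence "v $ j = 0" using j by simp
    thus False using j by (simp add: v_def)
  qed
  moreover have "Mc N B *\<^sub>v v = complex_of_real s \<cdot>\<^sub>v v"
  proof (rule eq_vecI)
    fix i assume i: "i < dim_vec (complex_of_real s \<cdot>\<^sub>v v)"
    hence i': "i < N" by (simp add: v_def)
    have "(Mc N B *\<^sub>v v) $ i = (\<Sum>j<N. complex_of_real (B i j) * complex_of_real (z j))"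
      using Mc_mult[OF i' vc] by (simp add: v_def)
    also have "\<dots> = complex_of_real (mv N B z i)" by (simp add: mv_def)
    also have "\<dots> = complex_of_real s * complex_of_real (z i)" using eq i' by simp
    finally show "(Mc N B *\<^sub>v v) $ i = (complex_of_real s \<cdot>\<^sub>v v) $ i" using i' by (simp add: v_def)
  qed (simp add: v_def)
  ultimately have "eigenvalue (Mc N B) (complex_of_real s)"
    unfolding eigenvalue_def eigenvector_def using vc by (auto simp: Mc_def)
  hence "norm (complex_of_real s) \<in> norm ` spectrum (Mc N B)" unfolding spectrum_def by blast
  from spectral_radius_mem_max(2)[OF Mc_carrier _ this] j show ?thesis by simp
qed

lemma Mc_vec: "Mc N B *\<^sub>v vec N (\<lambda>j. complex_of_real (w j)) = vec N (\<lambda>i. complex_of_real (mv N B w i))"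
proof (rule eq_vecI)
  fix i assume "i < dim_vec (vec N (\<lambda>i. complex_of_real (mv N B w i)))"
  hence i: "i < N" by simp
  show "(Mc N B *\<^sub>v vec N (\<lambda>j. complex_of_real (w j))) $ i = vec N (\<lambda>i. complex_of_real (mv N B w i)) $ i"
    using Mc_mult[OF i, of "vec N (\<lambda>j. complex_of_real (w j))" B] i by (simp add: mv_def)
qed simp

lemma mv_cong: "(\<forall>j<N. x j = y j) \<Longrightarrow> mv N B x = mv N B y"
  unfolding mv_def by (intro ext sum.cong) auto

lemma pow_bridge:
  "i < N \<Longrightarrow> complex_of_real (((mv N B) ^^ k) w i) = (Mc N B ^\<^sub>m k *\<^sub>v vec N (\<lambda>j. complex_of_real (w j))) $ i"
proof (induction k arbitrary: w i)
  case 0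
  then show ?case by simp
next
  case (Suc k)
  let ?y = "vec N (\<lambda>j. complex_of_real (w j))"
  have e1: "Mc N B ^\<^sub>m Suc k *\<^sub>v ?y = Mc N B ^\<^sub>m k *\<^sub>v (Mc N B *\<^sub>v ?y)"
    using assoc_mult_mat_vec[of "Mc N B ^\<^sub>m k" N N "Mc N B" N ?y] by simp
  have e2: "((mv N B) ^^ Suc k) w = ((mv N B) ^^ k) (mv N B w)"
    by (simp only: funpow_Suc_right comp_def)
  show ?case unfolding e1 e2 Mc_vec using Suc.IH[OF Suc.prems, of "mv N B w"] by simp
qed

lemma pow_nonneg:
  assumes Bnn: "\<forall>i<N. \<forall>j<N. B i j \<ge> 0" and w: "\<forall>i<N. w i \<ge> 0"
  shows "\<forall>i<N. ((mv N B) ^^ k) w i \<ge> 0"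
proof (induction k)
  case 0 then show ?case using w by simp
next
  case (Suc k) then show ?case using Bnn by (auto simp: mv_def intro!: sum_nonneg)
qed

lemma pow_scale:
  assumes "c \<noteq> 0"
  shows "\<forall>i<N. ((mv N B) ^^ k) w i = c ^ k * ((mv N (\<lambda>i j. B i j / c)) ^^ k) w i"
proof (induction k)
  case 0 then show ?case by simp
next
  case (Suc k)
  show ?case
  proof (intro allI impI)
    fix i assume i: "i < N"
    have "((mv N B) ^^ Suc k) w i = (\<Sum>j<N. B i j * ((mv N B) ^^ k) w j)" by (simp add: mv_def)
    also have "\<dots> = (\<Sum>j<N. c ^ Suc k * (B i j / c * ((mv N (\<lambda>i j. B i j / c)) ^^ k) w j))"
      using Suc assms by (intro sum.cong) auto
    also have "\<dots> = c ^ Suc k * ((mv N (\<lambda>i j. B i j / c)) ^^ Suc k) w i"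
      by (simp add: mv_def sum_distrib_left)
    finally show "((mv N B) ^^ Suc k) w i = c ^ Suc k * ((mv N (\<lambda>i j. B i j / c)) ^^ Suc k) w i" .
  qed
qed

lemma rho_nonneg: assumes N: "N > 0" shows "spectral_radius (Mc N B) \<ge> 0"
proof -
  obtain l :: complex where "spectral_radius (Mc N B) = norm l"
    using spectral_radius_mem_max(1)[OF Mc_carrier[of N B] N] by auto
  thus ?thesis by simp
qed

lemma rho_scale:
  assumes c: "c > 0" and N: "N > 0" and r: "spectral_radius (Mc N B) < c"
  shows "spectral_radius (Mc N (\<lambda>i j. B i j / c)) < 1"
proof -
  let ?B' = "\<lambda>i j. B i j / c"
  obtain l where "l \<in> spectrum (Mc N ?B')" and r': "spectral_radius (Mc N ?B') = norm l"
    using spectral_radius_mem_max(1)[OF Mc_carrier[of N ?B'] N] by auto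
  then obtain v where vc: "v \<in> carrier_vec N" and v0: "v \<noteq> 0\<^sub>v N" and eq: "Mc N ?B' *\<^sub>v v = l \<cdot>\<^sub>v v"
    unfolding spectrum_def eigenvalue_def eigenvector_def by auto
  have "Mc N B *\<^sub>v v = (complex_of_real c * l) \<cdot>\<^sub>v v"
  proof (rule eq_vecI)
    fix i assume "i < dim_vec ((complex_of_real c * l) \<cdot>\<^sub>v v)"
    hence i: "i < N" using vc by simp
    have "(Mc N B *\<^sub>v v) $ i = complex_of_real c * (\<Sum>j<N. complex_of_real (B i j / c) * v $ j)"
      using Mc_mult[OF i vc] c by (simp add: sum_distrib_left)
    also have "\<dots> = complex_of_real c * ((Mc N ?B' *\<^sub>v v) $ i)" using Mc_mult[OF i vc] by simp
    also have "\<dots> = ((complex_of_real c * l) \<cdot>\<^sub>v v) $ i" using eq i vc by simp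
    finally show "(Mc N B *\<^sub>v v) $ i = ((complex_of_real c * l) \<cdot>\<^sub>v v) $ i" .
  qed (use vc in simp)
  hence "eigenvalue (Mc N B) (complex_of_real c * l)"
    unfolding eigenvalue_def eigenvector_def using vc v0 by auto
  hence "norm (complex_of_real c * l) \<in> norm ` spectrum (Mc N B)" unfolding spectrum_def by blast
  from spectral_radius_mem_max(2)[OF Mc_carrier[of N B] N this]
  have le: "c * norm l \<le> spectral_radius (Mc N B)" using c by (simp add: norm_mult)
  have "c * norm l < c * 1" using le r by linarith
  hence "norm l < 1" using c by (simp only: mult_less_cancel_left_pos)
  thus ?thesis using r' by simp
qed

lemma neumann:
  assumes Bnn: "\<forall>i<N. \<forall>j<N. B i j \<ge> 0" and s: "s > 0" and r: "spectral_radius (Mc N B) < s"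
  shows "\<exists>v. (\<forall>i<N. v i = w i + mv N B v i / s) \<and> ((\<forall>i<N. w i \<ge> 0) \<longrightarrow> (\<forall>i<N. v i \<ge> w i))"
proof (cases "N = 0")
  case True
  show ?thesis by (rule exI[of _ w]) (simp add: True)
next
  case False
  hence N: "N > 0" by simp
  define s' where "s' = (spectral_radius (Mc N B) + s) / 2"
  have r0: "spectral_radius (Mc N B) \<ge> 0" using rho_nonneg[OF N] .
  have s'pos: "s' > 0" and s's: "s' < s" and rs': "spectral_radius (Mc N B) < s'"
    using r r0 s unfolding s'_def by auto
  define B' where "B' = (\<lambda>i j. B i j / s')"
  have "spectral_radius (Mc N B') < 1" unfolding B'_def by (rule rho_scale[OF s'pos N rs'])
  from spectral_radius_jnf_norm_bound_less_1_upper_triangular[OF Mc_carrier this]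
  obtain c where c: "\<And>k. norm_bound (Mc N B' ^\<^sub>m k) c" by auto
  define D where "D = c * (\<Sum>j<N. \<bar>w j\<bar>)"
  have bnd: "\<bar>((mv N B') ^^ k) w i\<bar> \<le> D" if i: "i < N" for k i
  proof -
    have "\<bar>((mv N B') ^^ k) w i\<bar> = norm ((Mc N B' ^\<^sub>m k *\<^sub>v vec N (\<lambda>j. complex_of_real (w j))) $ i)"
      using pow_bridge[OF i, where B=B' and k=k and w=w] by (metis norm_of_real)
    also have "\<dots> = norm (\<Sum>j<N. (Mc N B' ^\<^sub>m k) $$ (i, j) * complex_of_real (w j))"
      using i by (simp add: scalar_prod_def row_def atLeast0LessThan)
    also have "\<dots> \<le> (\<Sum>j<N. norm ((Mc N B' ^\<^sub>m k) $$ (i, j) * complex_of_real (w j)))" by (rule norm_sum)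
    also have "\<dots> \<le> (\<Sum>j<N. c * \<bar>w j\<bar>)"
    proof (intro sum_mono)
      fix j assume "j \<in> {..<N}"
      hence "norm ((Mc N B' ^\<^sub>m k) $$ (i, j)) \<le> c" using c[of k] i unfolding norm_bound_def by auto
      thus "norm ((Mc N B' ^\<^sub>m k) $$ (i, j) * complex_of_real (w j)) \<le> c * \<bar>w j\<bar>"
        by (simp add: norm_mult mult_right_mono)
    qed
    also have "\<dots> = D" by (simp add: D_def sum_distrib_left)
    finally show ?thesis .
  qed
  define T where "T k i = ((mv N B) ^^ k) w i / s ^ k" for k i
  have Tb: "\<bar>T k i\<bar> \<le> D * (s' / s) ^ k" if i: "i < N" for k i
  proof -
    have "T k i = (s' / s) ^ k * ((mv N B') ^^ k) w i"
      using pow_scale[where c=s' and N=N and B=B and k=k and w=w] s'pos i unfolding T_def B'_def by (simp add: power_divide)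
    hence "\<bar>T k i\<bar> = (s' / s) ^ k * \<bar>((mv N B') ^^ k) w i\<bar>" using s'pos s by (simp add: abs_mult)
    also have "\<dots> \<le> (s' / s) ^ k * D" using bnd[OF i] s'pos s by (intro mult_left_mono) auto
    finally show ?thesis by (simp add: mult.commute)
  qed
  have summ: "summable (\<lambda>k. T k i)" if i: "i < N" for i
  proof (rule summable_comparison_test')
    show "summable (\<lambda>k. D * (s' / s) ^ k)"
      using s'pos s's by (intro summable_mult summable_geometric) simp
    show "norm (T k i) \<le> D * (s' / s) ^ k" for k using Tb[OF i] by simp
  qed
  define v where "v i = (\<Sum>k. T k i)" for i
  have TS: "T (Suc k) i = (\<Sum>j<N. B i j * T k j) / s" for k i
    by (simp add: T_def mv_def sum_divide_distrib sum_distrib_left ac_simps)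
  have eqn: "v i = w i + mv N B v i / s" if i: "i < N" for i
  proof -
    have "(\<Sum>k. T (Suc k) i) = v i - T 0 i" using suminf_split_head[OF summ[OF i]] by (simp add: v_def)
    moreover have "(\<Sum>k. T (Suc k) i) = mv N B v i / s"
    proof -
      have "(\<Sum>k. T (Suc k) i) = (\<Sum>k. (\<Sum>j<N. B i j * T k j)) / s"
        unfolding TS by (rule suminf_divide) (intro summable_sum summable_mult summ, simp)
      also have "(\<Sum>k. (\<Sum>j<N. B i j * T k j)) = (\<Sum>j<N. \<Sum>k. B i j * T k j)"
        by (rule suminf_sum) (intro summable_mult summ, simp)
      also have "\<dots> = mv N B v i"
        unfolding mv_def v_def by (intro sum.cong refl suminf_mult summ) simp
      finally show ?thesis .
    qed
    ultimately show ?thesis by (simp add: T_def)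
  qed
  have ge: "v i \<ge> w i" if w: "\<forall>i<N. w i \<ge> 0" and i: "i < N" for i
  proof -
    have sS: "summable (\<lambda>k. T (Suc k) i)"
      using summable_ignore_initial_segment[OF summ[OF i], of 1] by simp
    have nn: "T (Suc k) i \<ge> 0" for k
      using pow_nonneg[OF Bnn w, rule_format, OF i, of "Suc k"] s unfolding T_def
      by (intro divide_nonneg_pos) auto
    have "(\<Sum>k. T (Suc k) i) \<ge> 0" by (rule suminf_nonneg[OF sS nn])
    thus ?thesis using suminf_split_head[OF summ[OF i]] by (simp add: v_def T_def)
  qed
  show ?thesis using eqn ge by blast
qed

definition Bm :: "(nat \<Rightarrow> nat \<Rightarrow> nat \<Rightarrow> real) \<Rightarrow> (nat \<Rightarrow> real) \<Rightarrow> (nat \<Rightarrow> nat) \<Rightarrow> nat \<Rightarrow> nat \<Rightarrow> real" where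
  "Bm g mu c = (\<lambda>i j. if j = i then 0 else mu i * g i (c i) j / g i (c i) i)"

lemma map_G: "map_mat complex_of_real (1\<^sub>m N - G_mat N g mu c) = Mc N (Bm g mu c)"
  by (rule eq_matI) (auto simp: Mc_def Bm_def G_mat_def a_entry_def)

lemma rho_G: "rho (1\<^sub>m N - G_mat N g mu c) = spectral_radius (Mc N (Bm g mu c))"
  unfolding rho_def map_G ..

lemma Mc_Bm_cong: "(\<forall>i<N. c i = c' i) \<Longrightarrow> Mc N (Bm g mu c) = Mc N (Bm g mu c')"
  by (rule eq_matI) (auto simp: Mc_def Bm_def)

lemma rho_set:
  "rho ` (\<lambda>G. 1\<^sub>m N - G) ` G_set N K g mu
     = (\<lambda>c. spectral_radius (Mc N (Bm g mu c))) ` (\<Pi>\<^sub>E i\<in>{..<N}. {..<K i})"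
proof (intro equalityI subsetI)
  fix x assume "x \<in> rho ` (\<lambda>G. 1\<^sub>m N - G) ` G_set N K g mu"
  then obtain c where c: "\<forall>i<N. c i < K i" and x: "x = rho (1\<^sub>m N - G_mat N g mu c)"
    unfolding G_set_def by auto
  let ?c = "restrict c {..<N}"
  have "?c \<in> (\<Pi>\<^sub>E i\<in>{..<N}. {..<K i})" using c by auto
  moreover have "x = spectral_radius (Mc N (Bm g mu ?c))"
    unfolding x rho_G using Mc_Bm_cong[of N c ?c g mu] by simp
  ultimately show "x \<in> (\<lambda>c. spectral_radius (Mc N (Bm g mu c))) ` (\<Pi>\<^sub>E i\<in>{..<N}. {..<K i})" by blast
next
  fix x assume "x \<in> (\<lambda>c. spectral_radius (Mc N (Bm g mu c))) ` (\<Pi>\<^sub>E i\<in>{..<N}. {..<K i})"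
  then obtain c where c: "c \<in> (\<Pi>\<^sub>E i\<in>{..<N}. {..<K i})" and x: "x = spectral_radius (Mc N (Bm g mu c))" by auto
  have "G_mat N g mu c \<in> G_set N K g mu" using c unfolding G_set_def by auto
  thus "x \<in> rho ` (\<lambda>G. 1\<^sub>m N - G) ` G_set N K g mu" unfolding x rho_G[symmetric] by blast
qed

lemma path_bound:
  fixes B :: "nat \<Rightarrow> nat \<Rightarrow> real"
  assumes ab: "(a, b) \<in> {(a, b). a < N \<and> b < N \<and> B a b \<noteq> 0}\<^sup>+"
    and Bnn: "\<forall>i<N. \<forall>j<N. B i j \<ge> 0"
  shows "\<exists>q>0. \<exists>L\<ge>1. \<forall>s>0. \<forall>v. (\<forall>i<N. \<forall>j<N. B i j * v j \<le> s * v i) \<longrightarrow> q * v b \<le> s ^ L * v a"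
  using ab
proof (induction rule: trancl_induct)
  case (base y)
  hence y: "a < N" "y < N" "B a y \<noteq> 0" by auto
  have "B a y \<ge> 0" using Bnn y(1,2) by blast
  hence "B a y > 0" using y(3) by (auto simp: less_le)
  thus ?case using y by (intro exI[of _ "B a y"] conjI exI[of _ 1]) auto
next
  case (step y z)
  from step.IH obtain q L where q: "q > 0" "L \<ge> 1"
    and h: "\<forall>s>0. \<forall>v. (\<forall>i<N. \<forall>j<N. B i j * v j \<le> s * v i) \<longrightarrow> q * v y \<le> s ^ L * v a" by auto
  from step.hyps(2) have yz: "y < N" "z < N" "B y z \<noteq> 0" by auto
  have "B y z \<ge> 0" using Bnn yz(1,2) by blast
  hence Bp: "B y z > 0" using yz(3) by (auto simp: less_le)
  show ?case
  proof (intro exI[of _ "q * B y z"] conjI exI[of _ "Suc L"] allI impI)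
    show "q * B y z > 0" using q Bp by simp
    show "Suc L \<ge> 1" by simp
    fix s :: real and v assume s: "s > 0" and hv: "\<forall>i<N. \<forall>j<N. B i j * v j \<le> s * v i"
    have 1: "q * v y \<le> s ^ L * v a" using h s hv by blast
    have 2: "B y z * v z \<le> s * v y" using hv yz by blast
    have "q * B y z * v z = q * (B y z * v z)" by simp
    also have "\<dots> \<le> q * (s * v y)" using 2 q by (intro mult_left_mono) auto
    also have "\<dots> = s * (q * v y)" by simp
    also have "\<dots> \<le> s * (s ^ L * v a)" using 1 s by (intro mult_left_mono) auto
    also have "\<dots> = s ^ Suc L * v a" by simp
    finally show "q * B y z * v z \<le> s ^ Suc L * v a" .
  qed
qed

lemma rho_pos:
  assumes Bnn: "\<forall>i<N. \<forall>j<N. B i j \<ge> 0" and N: "N > 0"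
    and cyc: "(0, 0) \<in> {(a, b). a < N \<and> b < N \<and> B a b \<noteq> 0}\<^sup>+"
  shows "spectral_radius (Mc N B) > 0"
proof (rule ccontr)
  assume "\<not> ?thesis"
  hence r0: "spectral_radius (Mc N B) \<le> 0" by simp
  obtain q L where q: "q > 0" "L \<ge> 1"
    and h: "\<forall>s>0. \<forall>v. (\<forall>i<N. \<forall>j<N. B i j * v j \<le> s * v i) \<longrightarrow> q * v 0 \<le> s ^ L * v 0"
    using path_bound[OF cyc Bnn] by blast
  define s where "s = min 1 q / 2"
  have s: "s > 0" "s \<le> 1" "s < q" using q unfolding s_def by auto
  have "spectral_radius (Mc N B) < s" using r0 s by simp
  from neumann[OF Bnn s(1) this, of "\<lambda>_. 1"] obtain v where
    v: "\<forall>i<N. v i = 1 + mv N B v i / s" and vge: "\<forall>i<N. v i \<ge> 1" by auto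
  have vnn: "\<forall>i<N. v i \<ge> 0" using vge by (auto intro: order_trans[of 0 1])
  have "\<forall>i<N. \<forall>j<N. B i j * v j \<le> s * v i"
  proof (intro allI impI)
    fix i j assume i: "i < N" and j: "j < N"
    have "B i j * v j \<le> (\<Sum>j<N. B i j * v j)"
      using Bnn vnn i j by (intro member_le_sum) auto
    also have "\<dots> = mv N B v i" by (simp add: mv_def)
    also have "\<dots> = s * v i - s" using v i s by (simp add: field_simps)
    also have "\<dots> \<le> s * v i" using s by simp
    finally show "B i j * v j \<le> s * v i" .
  qed
  with h s have "q * v 0 \<le> s ^ L * v 0" by blast
  moreover have "s ^ L \<le> s ^ 1" using s q by (intro power_decreasing) auto
  moreover have "v 0 \<ge> 1" using vge N by auto
  ultimately have "q * v 0 \<le> s * v 0" by (smt (verit) mult_right_mono power_one_right)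
  hence "q \<le> s" using \<open>v 0 \<ge> 1\<close> by (simp add: mult_le_cancel_right)
  thus False using s by simp
qed

lemma row_expand:
  assumes i: "i < N"
  shows "(\<Sum>j<N. a_entry g (\<lambda>i. beta * mu i) i k j * p j) = p i - beta * mv N (Bm g mu (\<lambda>_. k)) p i"
proof -
  have "(\<Sum>j<N. a_entry g (\<lambda>i. beta * mu i) i k j * p j)
        = (\<Sum>j<N. (if j = i then p j else 0) - beta * (Bm g mu (\<lambda>_. k) i j * p j))"
    by (intro sum.cong) (auto simp: a_entry_def Bm_def)
  also have "\<dots> = (\<Sum>j<N. if j = i then p j else 0) - beta * (\<Sum>j<N. Bm g mu (\<lambda>_. k) i j * p j)"
    by (simp add: sum_subtractf sum_distrib_left)
  also have "\<dots> = p i - beta * mv N (Bm g mu (\<lambda>_. k)) p i" using i by (simp add: mv_def)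
  finally show ?thesis .
qed

lemma mv_row_cong: "(\<forall>j<N. B i j = B' i j) \<Longrightarrow> mv N B x i = mv N B' x i"
  unfolding mv_def by (intro sum.cong) auto

lemma mv_scale: "mv N B (\<lambda>j. t * x j) i = t * mv N B x i"
  unfolding mv_def by (simp add: sum_distrib_left algebra_simps)

lemma mv_diff: "mv N B (\<lambda>j. x j - y j) i = mv N B x i - mv N B y i"
  unfolding mv_def by (simp add: sum_subtractf algebra_simps)

lemma Bm_row: "Bm g mu c i j = Bm g mu (\<lambda>_. c i) i j"
  by (simp add: Bm_def)

lemma Bm_nonneg:
  assumes g_nonneg: "\<forall>i<N. \<forall>k<K i. \<forall>j<N. g i k j \<ge> 0"
    and g_direct_pos: "\<forall>i<N. \<forall>k<K i. g i k i > 0"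
    and mu_pos: "\<forall>i<N. mu i > 0"
    and c: "\<forall>i<N. c i < K i"
  shows "\<forall>i<N. \<forall>j<N. Bm g mu c i j \<ge> 0"
proof (intro allI impI)
  fix i j assume i: "i < N" and j: "j < N"
  have "mu i > 0" "g i (c i) j \<ge> 0" "g i (c i) i > 0" using assms i j by auto
  thus "Bm g mu c i j \<ge> 0" by (simp add: Bm_def)
qed

theorem mainTheorem6:
  fixes N :: nat and K :: "nat \<Rightarrow> nat" and g :: "nat \<Rightarrow> nat \<Rightarrow> nat \<Rightarrow> real"
    and sigma2 :: real and mu :: "nat \<Rightarrow> real"
  assumes N_pos: "N \<ge> 1"
    and K_pos: "\<forall>i<N. K i \<ge> 1"
    and g_nonneg: "\<forall>i<N. \<forall>k<K i. \<forall>j<N. g i k j \<ge> 0"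
    and g_direct_pos: "\<forall>i<N. \<forall>k<K i. g i k i > 0"
    and sigma_pos: "sigma2 > 0"
    and mu_pos: "\<forall>i<N. mu i > 0"
    and irred: "\<forall>G\<in>G_set N K g mu. irreducible_mat (1\<^sub>m N - G)"
  shows "(\<forall>beta>0. (\<exists>p. (\<forall>j<N. p j \<ge> 0) \<and> A_ge_n N K g sigma2 (\<lambda>i. beta * mu i) p)
                   \<longleftrightarrow> beta < beta_star N K g mu)
         \<and> Sup {beta. beta > 0 \<and> (\<exists>p. (\<forall>j<N. p j \<ge> 0) \<and> A_ge_n N K g sigma2 (\<lambda>i. beta * mu i) p)}
             = beta_star N K g mu"
proof -
  define Cs where "Cs = (\<Pi>\<^sub>E i\<in>{..<N}. {..<K i})"
  define r where "r c = spectral_radius (Mc N (Bm g mu c))" for c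
  define F where "F beta = (\<exists>p. (\<forall>j<N. p j \<ge> 0) \<and> A_ge_n N K g sigma2 (\<lambda>i. beta * mu i) p)" for beta
  have N0: "N > 0" using N_pos by simp
  have finC: "finite Cs" by (simp add: Cs_def finite_PiE)
  have CsD: "\<forall>i<N. c i < K i" if "c \<in> Cs" for c using that by (auto simp: Cs_def)
  have Cne: "restrict (\<lambda>_. 0) {..<N} \<in> Cs" using K_pos by (auto simp: Cs_def Suc_le_eq)
  have Bnn: "\<forall>i<N. \<forall>j<N. Bm g mu c i j \<ge> 0" if "c \<in> Cs" for c
    using Bm_nonneg[OF g_nonneg g_direct_pos mu_pos CsD[OF that]] .
  have rpos: "r c > 0" if c: "c \<in> Cs" for c
  proof -
    have "G_mat N g mu c \<in> G_set N K g mu" using CsD[OF c] unfolding G_set_def by auto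
    hence irr: "irreducible_mat (1\<^sub>m N - G_mat N g mu c)" using irred by blast
    have ent: "(1\<^sub>m N - G_mat N g mu c) $$ (a, b) = Bm g mu c a b" if "a < N" "b < N" for a b
      using that by (simp add: G_mat_def a_entry_def Bm_def)
    have eqR: "{(a, b). a < dim_row (1\<^sub>m N - G_mat N g mu c) \<and> b < dim_row (1\<^sub>m N - G_mat N g mu c)
             \<and> (1\<^sub>m N - G_mat N g mu c) $$ (a, b) \<noteq> 0}
          = {(a, b). a < N \<and> b < N \<and> Bm g mu c a b \<noteq> 0}"
    proof -
      have dG: "dim_row (G_mat N g mu c) = N" by (simp add: G_mat_def)
      show ?thesis using ent dG by auto
    qed
    have dim: "dim_row (1\<^sub>m N - G_mat N g mu c) = N" by (simp add: G_mat_def)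
    have "0 < dim_row (1\<^sub>m N - G_mat N g mu c)" using dim N0 by simp
    hence h0: "(0, 0) \<in> {(a, b). a < dim_row (1\<^sub>m N - G_mat N g mu c) \<and> b < dim_row (1\<^sub>m N - G_mat N g mu c)
             \<and> (1\<^sub>m N - G_mat N g mu c) $$ (a, b) \<noteq> 0}\<^sup>+"
      using irr unfolding irreducible_mat_def by blast
    have "(0, 0) \<in> {(a, b). a < N \<and> b < N \<and> Bm g mu c a b \<noteq> 0}\<^sup>+"
      using h0 unfolding eqR .
    from rho_pos[OF Bnn[OF c] N0 this] show ?thesis by (simp add: r_def)
  qed
  define M where "M = Max (r ` Cs)"
  have bs: "beta_star N K g mu = 1 / M"
    unfolding beta_star_def rho_set M_def r_def Cs_def ..
  have MC: "M \<in> r ` Cs" unfolding M_def using finC Cne by (intro Max_in) auto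
  have Mge: "r c \<le> M" if "c \<in> Cs" for c unfolding M_def using finC that by auto
  have Mpos: "M > 0" using rpos Cne Mge by (meson less_le_trans)
  have key: "F beta \<longleftrightarrow> beta < 1 / M" if beta: "beta > 0" for beta
  proof
    assume "F beta"
    then obtain p where pnn: "\<forall>j<N. p j \<ge> 0" and A: "A_ge_n N K g sigma2 (\<lambda>i. beta * mu i) p"
      unfolding F_def by blast
    obtain c0 where c0: "c0 \<in> Cs" "r c0 = M" using MC by auto
    have h: "p i > 0 \<and> mv N (Bm g mu c0) p i < (1 / beta) * p i" if i: "i < N" for i
    proof -
      have k: "c0 i < K i" using CsD[OF c0(1)] i by auto
      have npos: "n_entry g sigma2 (\<lambda>i. beta * mu i) i (c0 i) > 0"
        using mu_pos g_direct_pos sigma_pos beta i k by (simp add: n_entry_def)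
      have "(\<Sum>j<N. a_entry g (\<lambda>i. beta * mu i) i (c0 i) j * p j) \<ge> n_entry g sigma2 (\<lambda>i. beta * mu i) i (c0 i)"
        using A i k unfolding A_ge_n_def by blast
      moreover have "mv N (Bm g mu (\<lambda>_. c0 i)) p i = mv N (Bm g mu c0) p i"
        by (rule mv_row_cong) (simp add: Bm_def)
      ultimately have 1: "p i - beta * mv N (Bm g mu c0) p i > 0"
        using npos row_expand[OF i, of g beta mu "c0 i" p] by simp
      have "mv N (Bm g mu c0) p i \<ge> 0"
        unfolding mv_def using Bnn[OF c0(1)] pnn i by (intro sum_nonneg mult_nonneg_nonneg) auto
      hence "p i > 0" using 1 beta by (smt (verit) mult_nonneg_nonneg)
      moreover have "mv N (Bm g mu c0) p i < p i / beta" using 1 beta by (simp add: pos_less_divide_eq mult.commute)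
      ultimately show ?thesis by simp
    qed
    have "r c0 < 1 / beta" unfolding r_def
      by (rule rho_le[where x=p]) (use h Bnn[OF c0(1)] N0 in auto)
    hence "M < 1 / beta" using c0 by simp
    hence "M * beta < 1" using beta by (simp add: pos_less_divide_eq)
    thus "beta < 1 / M" using Mpos by (simp add: pos_less_divide_eq mult.commute)
  next
    assume bM: "beta < 1 / M"
    define s where "s = 1 / beta"
    have s: "s > 0" using beta by (simp add: s_def)
    have bs1: "beta * s = 1" using beta by (simp add: s_def)
    have Ms: "M < s" using bM Mpos beta unfolding s_def
      by (simp add: pos_less_divide_eq mult.commute)
    have rs: "r c < s" if "c \<in> Cs" for c using Mge[OF that] Ms by simp
    have "\<forall>c\<in>Cs. \<exists>v. (\<forall>i<N. v i = 1 + mv N (Bm g mu c) v i / s) \<and> (\<forall>i<N. v i \<ge> 1)"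
    proof
      fix c assume c: "c \<in> Cs"
      from neumann[OF Bnn[OF c] s rs[OF c, unfolded r_def], of "\<lambda>_. 1"]
      show "\<exists>v. (\<forall>i<N. v i = 1 + mv N (Bm g mu c) v i / s) \<and> (\<forall>i<N. v i \<ge> 1)" by auto
    qed
    then obtain V where V: "\<And>c. c \<in> Cs \<Longrightarrow> (\<forall>i<N. V c i = 1 + mv N (Bm g mu c) (V c) i / s) \<and> (\<forall>i<N. V c i \<ge> 1)"
      by metis
    define f where "f c = (\<Sum>i<N. V c i)" for c
    have "Max (f ` Cs) \<in> f ` Cs" using finC Cne by (intro Max_in) auto
    then obtain c0 where c0: "c0 \<in> Cs" "f c0 = Max (f ` Cs)" by auto
    have fmax: "f c \<le> f c0" if "c \<in> Cs" for c using c0 finC that by auto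
    define x where "x = V c0"
    have claim: "mv N (Bm g mu (\<lambda>_. k)) x i \<le> s * (x i - 1)" if i: "i < N" and k: "k < K i" for i k
    proof (rule ccontr)
      assume "\<not> ?thesis"
      hence neg: "mv N (Bm g mu (\<lambda>_. k)) x i > s * (x i - 1)" by simp
      define c' where "c' = c0(i := k)"
      have c'C: "c' \<in> Cs" using c0(1) i k unfolding c'_def Cs_def by (auto simp: PiE_iff extensional_def)
      define y where "y = V c'"
      let ?B = "Bm g mu c'"
      have Vx: "\<forall>j<N. x j = 1 + mv N (Bm g mu c0) x j / s" using V[OF c0(1)] by (simp add: x_def)
      have Vy: "\<forall>j<N. y j = 1 + mv N ?B y j / s" using V[OF c'C] by (simp add: y_def)
      define w where "w j = 1 + mv N ?B x j / s - x j" for j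
      have w0: "w j = 0" if "j < N" "j \<noteq> i" for j
      proof -
        have "mv N ?B x j = mv N (Bm g mu c0) x j"
          by (rule mv_row_cong) (use that in \<open>simp add: Bm_def c'_def\<close>)
        thus ?thesis using Vx that by (simp add: w_def)
      qed
      have wi: "w i > 0"
      proof -
        have "mv N ?B x i = mv N (Bm g mu (\<lambda>_. k)) x i"
          by (rule mv_row_cong) (simp add: Bm_def c'_def)
        hence "mv N ?B x i / s > x i - 1" using neg s by (simp add: pos_less_divide_eq mult.commute)
        thus ?thesis by (simp add: w_def)
      qed
      have wnn: "\<forall>j<N. w j \<ge> 0" using w0 wi by (metis less_le_not_le order_refl)
      define z where "z j = y j - x j" for j
      have zeq: "z j = w j + mv N ?B z j / s" if j: "j < N" for j
      proof -
        have "mv N ?B z j = mv N ?B y j - mv N ?B x j" unfolding z_def by (rule mv_diff)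
        thus ?thesis using Vy j unfolding z_def w_def by (simp add: diff_divide_distrib)
      qed
      obtain u where ueq: "\<forall>j<N. u j = w j + mv N ?B u j / s" and uge: "\<forall>j<N. u j \<ge> w j"
        using neumann[OF Bnn[OF c'C] s rs[OF c'C, unfolded r_def], of w] wnn by blast
      have zu: "\<forall>j<N. z j = u j"
      proof (rule ccontr)
        assume "\<not> ?thesis"
        then obtain j where j: "j < N" "z j - u j \<noteq> 0" by auto
        have "\<forall>l<N. mv N ?B (\<lambda>j. z j - u j) l = s * (z l - u l)"
        proof (intro allI impI)
          fix l assume l: "l < N"
          have "z l - u l = (mv N ?B z l - mv N ?B u l) / s" using zeq[OF l] ueq l by (simp add: diff_divide_distrib)
          thus "mv N ?B (\<lambda>j. z j - u j) l = s * (z l - u l)" using s by (simp add: mv_diff)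
        qed
        from rho_ge[OF j this] have "s \<le> r c'" using s by (simp add: r_def)
        thus False using rs[OF c'C] by simp
      qed
      have "f c' - f c0 = (\<Sum>j<N. z j)" unfolding f_def z_def y_def x_def by (simp add: sum_subtractf)
      also have "\<dots> = (\<Sum>j<N. u j)" using zu by simp
      also have "\<dots> \<ge> (\<Sum>j<N. w j)" using uge by (intro sum_mono) auto
      finally have "f c' - f c0 \<ge> (\<Sum>j<N. w j)" .
      moreover have "(\<Sum>j<N. w j) \<ge> w i" using wnn i by (intro member_le_sum) auto
      ultimately have "f c' > f c0" using wi by linarith
      thus False using fmax[OF c'C] by simp
    qed
    have xge: "\<forall>i<N. x i \<ge> 1" using V[OF c0(1)] unfolding x_def by blast
    define t where "t = (\<Sum>i<N. \<Sum>k<K i. n_entry g sigma2 (\<lambda>i. beta * mu i) i k)"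
    have nnn: "n_entry g sigma2 (\<lambda>i. beta * mu i) i k \<ge> 0" if "i < N" "k < K i" for i k
    proof -
      have "n_entry g sigma2 (\<lambda>i. beta * mu i) i k > 0"
        using mu_pos g_direct_pos sigma_pos beta that by (simp add: n_entry_def)
      thus ?thesis by simp
    qed
    have tge: "n_entry g sigma2 (\<lambda>i. beta * mu i) i k \<le> t" if i: "i < N" and k: "k < K i" for i k
    proof -
      have "n_entry g sigma2 (\<lambda>i. beta * mu i) i k \<le> (\<Sum>k<K i. n_entry g sigma2 (\<lambda>i. beta * mu i) i k)"
        using nnn i k by (intro member_le_sum) auto
      also have "\<dots> \<le> t" unfolding t_def using nnn i by (intro member_le_sum sum_nonneg) auto
      finally show ?thesis .
    qed
    have t0: "t \<ge> 0" unfolding t_def using nnn by (intro sum_nonneg) auto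
    define p where "p j = t * x j" for j
    have "(\<forall>j<N. p j \<ge> 0)" using t0 xge unfolding p_def by (smt (verit) mult_nonneg_nonneg)
    moreover have "A_ge_n N K g sigma2 (\<lambda>i. beta * mu i) p"
      unfolding A_ge_n_def
    proof (intro allI impI)
      fix i k assume i: "i < N" and k: "k < K i"
      have "(\<Sum>j<N. a_entry g (\<lambda>i. beta * mu i) i k j * p j) = p i - beta * mv N (Bm g mu (\<lambda>_. k)) p i"
        by (rule row_expand[OF i])
      also have "\<dots> = t * (x i - beta * mv N (Bm g mu (\<lambda>_. k)) x i)"
        unfolding p_def mv_scale by (simp add: algebra_simps)
      finally have eq: "(\<Sum>j<N. a_entry g (\<lambda>i. beta * mu i) i k j * p j) = t * (x i - beta * mv N (Bm g mu (\<lambda>_. k)) x i)" .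
      have "beta * mv N (Bm g mu (\<lambda>_. k)) x i \<le> beta * (s * (x i - 1))"
        using claim[OF i k] beta by (intro mult_left_mono) auto
      also have "\<dots> = x i - 1" using bs1 by (simp add: mult.assoc[symmetric])
      finally have "x i - beta * mv N (Bm g mu (\<lambda>_. k)) x i \<ge> 1" by simp
      hence "t * (x i - beta * mv N (Bm g mu (\<lambda>_. k)) x i) \<ge> t * 1" using t0 by (intro mult_left_mono) auto
      thus "(\<Sum>j<N. a_entry g (\<lambda>i. beta * mu i) i k j * p j) \<ge> n_entry g sigma2 (\<lambda>i. beta * mu i) i k"
        using eq tge[OF i k] by simp
    qed
    ultimately show "F beta" unfolding F_def by blast
  qed
  have set: "{beta. beta > 0 \<and> F beta} = {0<..<1 / M}" using key by auto
  have "Sup {beta. beta > 0 \<and> F beta} = 1 / M" unfolding set using Mpos by simp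
  thus ?thesis using key unfolding bs F_def by auto
qed

end
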